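(* Let $T$ be a real-valued random variable with law $\mathrm{P}_0$, let $T^*$ be an independent copy, and let $Q = \tfrac{1}{2}\mathrm{P}_0(T^* \geq T\mid T)+\tfrac{1}{2}\mathrm{P}_0(T^* > T\mid T)$ be the mid-p-value, considered under $T\sim \mathrm{P}_0$. Let $F_Q$ be the distribution function of $Q$ and $S_Q$ the (closed) support of $Q$. Then for every $x \in S_Q$, $$F_Q(x) = \sup\{F_W(x): F_W \text{ is a sub-uniform distribution function and } F_W(y) = F_Q(y) \text{ for all } y\in S_Q\cap [0,x)\},$$ where the requirement $F_W = F_Q$ on $S_Q\cap[0,x)$ is dropped when $S_Q\cap [0,x)$ is empty.
   Context: A random variable $W$ (and its law and distribution function) is called sub-uniform if $W$ is dominated by a uniform random variable $U$ on $[0,1]$ in the convex order, i.e. $\mathrm{E}\{h(W)\}\le \mathrm{E}\{h(U)\}$ for every convex $h:\mathbb{R}\to\mathbb{R}$ for which the expectations exist. *)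

theory Defs
  imports "HOL-Probability.Probability"
begin

definition unif01 :: "real measure" where
  "unif01 = uniform_measure lborel {0..1}"

text \<open>A (Borel probability) law on the reals is sub-uniform if it is dominated by the
  uniform law on [0,1] in the convex order: for every convex h the expectation under the
  law exists and does not exceed the expectation under the uniform law. (Under the
  extended-valued reading, E h(W) = +infinity would violate the inequality, so
  integrability is part of the requirement.)\<close>
definition sub_uniform :: "real measure \<Rightarrow> bool" where
  "sub_uniform W \<longleftrightarrow> prob_space W \<and> sets W = sets borel \<and>
     (\<forall>h::real \<Rightarrow> real. convex_on UNIV h \<longrightarrow>
        integrable W h \<and> integral\<^sup>L W h \<le> integral\<^sup>L unif01 h)"

text \<open>Mid-p-value as function of the observed value t, where T* ~ P0 is independent of T:
  Q(t) = 1/2 P0(T* >= t) + 1/2 P0(T* > t).\<close>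
definition midp :: "real measure \<Rightarrow> real \<Rightarrow> real" where
  "midp P0 t = 1/2 * measure P0 {t..} + 1/2 * measure P0 {t<..}"

definition supp :: "real measure \<Rightarrow> real set" where
  "supp M = {x. \<forall>e>0. 0 < measure M {x - e<..<x + e}}"

end

theory Submission
  imports Defs
begin

abbreviation Lam :: "real measure" where "Lam \<equiv> restrict_space lborel {0<..<1::real}"

lemma prob_space_Lam: "prob_space Lam"
  by (auto simp add: emeasure_restrict_space space_restrict_space intro!: prob_spaceI)

lemma space_Lam[simp]: "space Lam = {0<..<1}" by (simp add: space_restrict_space)

lemma sets_Lam: "sets Lam = sets (restrict_space borel {0<..<1::real})"
  by (rule sets_restrict_space_cong) simp

lemma measure_Lam: "A \<subseteq> {0<..<1} \<Longrightarrow> measure Lam A = measure lborel A"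
  by (rule measure_restrict_space) auto

lemma cdf_distr_Lam:
  fixes f :: "real \<Rightarrow> real"
  assumes f: "f \<in> borel_measurable Lam"
  shows "cdf (distr Lam borel f) s = measure lborel {\<omega>\<in>{0<..<1}. f \<omega> \<le> s}"
proof -
  have "cdf (distr Lam borel f) s = measure Lam (f -` {..s} \<inter> space Lam)"
    unfolding cdf_def by (rule measure_distr[OF f]) simp
  also have "f -` {..s} \<inter> space Lam = {\<omega>\<in>{0<..<1}. f \<omega> \<le> s}" by auto
  also have "measure Lam \<dots> = measure lborel {\<omega>\<in>{0<..<1}. f \<omega> \<le> s}"
    by (rule measure_Lam) auto
  finally show ?thesis .
qed

lemma real_distribution_distr_Lam:
  fixes f :: "real \<Rightarrow> real"
  assumes f: "f \<in> borel_measurable Lam"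
  shows "real_distribution (distr Lam borel f)"
proof -
  interpret L: prob_space Lam by (rule prob_space_Lam)
  show ?thesis by (rule L.real_distribution_distr) (simp add: f)
qed

lemma meas_id_Lam[measurable]: "(\<lambda>x::real. x) \<in> borel_measurable Lam"
  by (subst measurable_cong_sets[OF sets_Lam refl]) (rule measurable_restrict_space1, simp)

lemma integrable_Lam_bounded:
  fixes g :: "real \<Rightarrow> real"
  assumes g: "g \<in> borel_measurable Lam" and b: "\<And>\<omega>. \<omega> \<in> {0<..<1} \<Longrightarrow> \<bar>g \<omega>\<bar> \<le> B"
  shows "integrable Lam g"
proof -
  interpret L: prob_space Lam by (rule prob_space_Lam)
  show ?thesis
    by (rule L.integrable_const_bound[where B=B]) (auto intro!: AE_I2 b simp: g)
qed

lemma convex_bounded01: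
  fixes h :: "real \<Rightarrow> real"
  assumes "convex_on UNIV h"
  obtains B where "\<And>y. y \<in> {0..1} \<Longrightarrow> \<bar>h y\<bar> \<le> B"
proof -
  have c: "continuous_on UNIV h" by (rule convex_on_continuous[OF _ assms]) simp
  have "compact (h ` {0..1})"
    by (rule compact_continuous_image[OF continuous_on_subset[OF c]]) auto
  then obtain B where "\<forall>z\<in>h ` {0..1}. norm z \<le> B" using compact_imp_bounded bounded_iff by metis
  then have "\<And>y. y \<in> {0..1} \<Longrightarrow> \<bar>h y\<bar> \<le> B" by auto
  then show ?thesis by (rule that)
qed

context cdf_distribution
begin

definition qa where "qa \<omega> = measure M {..< I \<omega>}"
definition qb where "qb \<omega> = C (I \<omega>)"
definition Rf where "Rf \<omega> = qa \<omega> + qb \<omega> - \<omega>"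

lemma pinv: "\<omega> \<in> {0<..<1} \<Longrightarrow> \<omega> \<le> C x \<longleftrightarrow> I \<omega> \<le> x"
  using pseudoinverse[of \<omega> x] by auto

lemma L0: assumes "\<omega> \<in> {0<..<1}" "t \<le> I \<omega>" shows "measure M {..<t} \<le> \<omega>"
proof -
  have *: "C x \<le> \<omega>" if "x < t" for x
  proof -
    have "\<not> I \<omega> \<le> x" using that assms(2) by linarith
    then have "\<not> \<omega> \<le> C x" using pinv[OF assms(1), of x] by blast
    then show ?thesis by linarith
  qed
  have ev: "\<forall>\<^sub>F x in at_left t. C x \<le> \<omega>"
    using eventually_at_left_real[of "t - 1" t] by (rule eventually_mono) (auto intro: *)
  show ?thesis
    by (rule tendsto_upperbound[OF cdf_at_left ev]) (rule trivial_limit_at_left_real)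
qed

lemma qa_le: "\<omega> \<in> {0<..<1} \<Longrightarrow> qa \<omega> \<le> \<omega>"
  unfolding qa_def by (rule L0) auto

lemma le_qb: "\<omega> \<in> {0<..<1} \<Longrightarrow> \<omega> \<le> qb \<omega>"
  unfolding qb_def using pinv[of \<omega> "I \<omega>"] by simp

lemma qb_le_qa: "I \<omega>1 < I \<omega>2 \<Longrightarrow> qb \<omega>1 \<le> qa \<omega>2"
  unfolding qa_def qb_def cdf_def by (rule finite_measure_mono) auto

lemma qa_nonneg: "0 \<le> qa \<omega>" unfolding qa_def by simp
lemma qb_le1: "qb \<omega> \<le> 1" unfolding qb_def by (rule cdf_bounded_prob)

lemma L3: assumes "\<omega>' \<in> {0<..<1}" "qa \<omega> < \<omega>'" "\<omega>' < qb \<omega>"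
  shows "I \<omega>' = I \<omega>"
proof -
  have "I \<omega>' \<le> I \<omega>" using pinv[OF assms(1), of "I \<omega>"] assms(3) unfolding qb_def by simp
  moreover have "\<not> I \<omega>' < I \<omega>"
  proof
    assume "I \<omega>' < I \<omega>"
    then have "qb \<omega>' \<le> qa \<omega>" by (rule qb_le_qa)
    with le_qb[OF assms(1)] assms(2) show False by simp
  qed
  ultimately show ?thesis by simp
qed

lemma lt_qa_imp: assumes "\<omega> \<in> {0<..<1}" "\<omega> < qa s" shows "I \<omega> < I s"
proof (rule ccontr)
  assume "\<not> I \<omega> < I s"
  then have "I s \<le> I \<omega>" by simp
  from L0[OF assms(1) this] assms(2) show False unfolding qa_def by simp
qed

lemma measurable_Lam_I[measurable]: "I \<in> borel_measurable Lam"
  using measurable_CI by (subst measurable_cong_sets[OF sets_Lam refl])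

lemma measurable_qa[measurable]: "qa \<in> borel_measurable Lam"
proof -
  have "(\<lambda>t. measure M {..<t}) \<in> borel_measurable borel"
    by (rule borel_measurable_mono) (auto simp: mono_def intro!: finite_measure_mono)
  then show ?thesis unfolding qa_def by measurable
qed

lemma measurable_qb[measurable]: "qb \<in> borel_measurable Lam"
  unfolding qb_def by measurable

lemma measurable_id_Lam[measurable]: "(\<lambda>x::real. x) \<in> borel_measurable Lam"
  by (subst measurable_cong_sets[OF sets_Lam refl]) (rule measurable_restrict_space1, simp)

lemma measurable_Rf[measurable]: "Rf \<in> borel_measurable Lam"
  unfolding Rf_def by measurable


lemma Rf_ge: "\<omega> \<in> {0<..<1} \<Longrightarrow> qa \<omega> \<le> Rf \<omega>"
  unfolding Rf_def using le_qb[of \<omega>] by simp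
lemma Rf_le: "\<omega> \<in> {0<..<1} \<Longrightarrow> Rf \<omega> \<le> qb \<omega>"
  unfolding Rf_def using qa_le[of \<omega>] by simp

lemma Lam_set_le: fixes f :: "real \<Rightarrow> real" shows "f \<in> borel_measurable Lam \<Longrightarrow> {\<omega>\<in>{0<..<1}. f \<omega> \<le> s} \<in> sets lborel"
proof -
  assume f: "f \<in> borel_measurable Lam"
  have "f -` {..s} \<inter> space Lam \<in> sets Lam" by (rule measurable_sets[OF f]) simp
  then have "{\<omega>\<in>{0<..<1}. f \<omega> \<le> s} \<in> sets Lam" by (simp add: Int_def conj_commute)
  then show ?thesis by (subst (asm) sets_restrict_space_iff) auto
qed

lemma key_s:
  assumes s: "0 < s" "s < 1"
  shows "emeasure lborel {\<omega>\<in>{0<..<1}. Rf \<omega> \<le> s} = ennreal s"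
proof -
  define \<alpha> where "\<alpha> = qa s"
  define \<beta> where "\<beta> = qb s"
  have sO: "s \<in> {0<..<1}" using s by simp
  have ab: "0 \<le> \<alpha>" "\<alpha> \<le> s" "s \<le> \<beta>" "\<beta> \<le> 1"
    using qa_nonneg qa_le[OF sO] le_qb[OF sO] qb_le1 unfolding \<alpha>_def \<beta>_def by auto
  let ?S = "{\<omega>\<in>{0<..<1}. Rf \<omega> \<le> s}"
  have Sm: "?S \<in> sets lborel" by (rule Lam_set_le) simp
  have A1: "{0<..<\<alpha>} \<subseteq> ?S"
  proof
    fix \<omega> assume w: "\<omega> \<in> {0<..<\<alpha>}"
    then have wO: "\<omega> \<in> {0<..<1}" using ab s by auto
    have "I \<omega> < I s" using lt_qa_imp[OF wO] w unfolding \<alpha>_def by simp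
    then have "qb \<omega> \<le> \<alpha>" unfolding \<alpha>_def by (rule qb_le_qa)
    then show "\<omega> \<in> ?S" using Rf_le[OF wO] wO ab by simp
  qed
  have A2: "{\<alpha>+\<beta>-s<..<\<beta>} \<subseteq> ?S"
  proof
    fix \<omega> assume w: "\<omega> \<in> {\<alpha>+\<beta>-s<..<\<beta>}"
    then have wO: "\<omega> \<in> {0<..<1}" using ab s by auto
    have "I \<omega> = I s" using L3[OF wO, of s] w ab unfolding \<alpha>_def \<beta>_def by simp
    then have "qa \<omega> = \<alpha>" "qb \<omega> = \<beta>" unfolding \<alpha>_def \<beta>_def qa_def qb_def by simp_all
    then show "\<omega> \<in> ?S" using wO w unfolding Rf_def by simp
  qed
  have "ennreal s = ennreal \<alpha> + ennreal (s - \<alpha>)"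
    using ab by (simp add: ennreal_plus[symmetric])
  also have "\<dots> = emeasure lborel {0<..<\<alpha>} + emeasure lborel {\<alpha>+\<beta>-s<..<\<beta>}"
    using ab by simp
  also have "\<dots> = emeasure lborel ({0<..<\<alpha>} \<union> {\<alpha>+\<beta>-s<..<\<beta>})"
    by (rule plus_emeasure) (use ab in auto)
  also have "\<dots> \<le> emeasure lborel ?S"
    by (rule emeasure_mono[OF _ Sm]) (use A1 A2 in auto)
  finally have lo: "ennreal s \<le> emeasure lborel ?S" .
  define B where "B = {\<omega>\<in>{0<..<1}. I s < I \<omega> \<and> Rf \<omega> \<le> s}"
  have Bprop: "qb \<omega> = \<omega> \<and> qa \<omega> = \<beta> \<and> \<beta> < \<omega>" if "\<omega> \<in> B" for \<omega>
  proof -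
    have wO: "\<omega> \<in> {0<..<1}" and lt: "I s < I \<omega>" and R: "Rf \<omega> \<le> s" using that unfolding B_def by auto
    have "\<beta> \<le> qa \<omega>" using qb_le_qa[OF lt] unfolding \<beta>_def .
    moreover have "qa \<omega> \<le> \<omega>" "\<omega> \<le> qb \<omega>" using qa_le[OF wO] le_qb[OF wO] .
    moreover note R[unfolded Rf_def] ab
    ultimately have 1: "qb \<omega> = \<omega>" "qa \<omega> = \<beta>" by linarith+
    have "\<omega> \<noteq> \<beta>"
    proof
      assume "\<omega> = \<beta>"
      then have "\<omega> \<le> C (I s)" unfolding \<beta>_def qb_def by simp
      then have "I \<omega> \<le> I s" using pinv[OF wO, of "I s"] by simp
      with lt show False by simp
    qed
    with 1 have "\<beta> < \<omega>" using \<open>qa \<omega> \<le> \<omega>\<close> by linarith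
    with 1 show ?thesis by simp
  qed
  have Buniq: "\<omega>1 = \<omega>2" if "\<omega>1 \<in> B" "\<omega>2 \<in> B" "\<omega>1 \<le> \<omega>2" for \<omega>1 \<omega>2
  proof (rule ccontr)
    assume ne: "\<omega>1 \<noteq> \<omega>2"
    have O: "\<omega>1 \<in> {0<..<1}" "\<omega>2 \<in> {0<..<1}" using that unfolding B_def by auto
    have "I \<omega>1 \<le> I \<omega>2" using mono_onD[OF mono_I O] that(3) by simp
    moreover have "I \<omega>1 \<noteq> I \<omega>2"
    proof
      assume "I \<omega>1 = I \<omega>2"
      then have "qb \<omega>1 = qb \<omega>2" unfolding qb_def by simp
      with Bprop[OF that(1)] Bprop[OF that(2)] ne show False by simp
    qed
    ultimately have "I \<omega>1 < I \<omega>2" by simp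
    then have "qb \<omega>1 \<le> qa \<omega>2" by (rule qb_le_qa)
    with Bprop[OF that(1)] Bprop[OF that(2)] show False by simp
  qed
  obtain c where Bc: "B \<subseteq> {c}"
  proof (cases "B = {}")
    case True then show ?thesis using that by blast
  next
    case False
    then obtain c where c: "c \<in> B" by blast
    have "B \<subseteq> {c}"
    proof
      fix w assume "w \<in> B"
      then show "w \<in> {c}" using Buniq[OF \<open>w \<in> B\<close> c] Buniq[OF c \<open>w \<in> B\<close>] by (cases "w \<le> c") auto
    qed
    then show ?thesis using that by blast
  qed
  have up: "?S \<subseteq> {0..\<alpha>} \<union> {\<alpha>+\<beta>-s..\<beta>} \<union> {c}"
  proof
    fix \<omega> assume w: "\<omega> \<in> ?S"
    then have wO: "\<omega> \<in> {0<..<1}" and R: "Rf \<omega> \<le> s" by auto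
    consider "I \<omega> < I s" | "I \<omega> = I s" | "I s < I \<omega>" by linarith
    then show "\<omega> \<in> {0..\<alpha>} \<union> {\<alpha>+\<beta>-s..\<beta>} \<union> {c}"
    proof cases
      case 1
      then have "qb \<omega> \<le> \<alpha>" unfolding \<alpha>_def by (rule qb_le_qa)
      then show ?thesis using le_qb[OF wO] wO by auto
    next
      case 2
      then have "qa \<omega> = \<alpha>" "qb \<omega> = \<beta>" unfolding \<alpha>_def \<beta>_def qa_def qb_def by simp_all
      then show ?thesis using R le_qb[OF wO] unfolding Rf_def by auto
    next
      case 3
      then have "\<omega> \<in> B" unfolding B_def using wO R by simp
      then show ?thesis using Bc by auto
    qed
  qed
  have "emeasure lborel ?S \<le> emeasure lborel ({0..\<alpha>} \<union> {\<alpha>+\<beta>-s..\<beta>} \<union> {c})"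
    by (rule emeasure_mono[OF up]) simp
  also have "\<dots> \<le> emeasure lborel ({0..\<alpha>} \<union> {\<alpha>+\<beta>-s..\<beta>}) + emeasure lborel {c}"
    by (rule emeasure_subadditive) simp_all
  also have "\<dots> \<le> emeasure lborel {0..\<alpha>} + emeasure lborel {\<alpha>+\<beta>-s..\<beta>}"
    using emeasure_subadditive[of "{0..\<alpha>}" lborel "{\<alpha>+\<beta>-s..\<beta>}"] by simp
  also have "\<dots> = ennreal \<alpha> + ennreal (s - \<alpha>)" using ab by simp
  also have "\<dots> = ennreal s" using ab by (simp add: ennreal_plus[symmetric])
  finally show ?thesis using lo by (rule antisym)
qed


lemma Rf_cdf: "measure lborel {\<omega>\<in>{0<..<1}. Rf \<omega> \<le> s} = measure lborel {\<omega>\<in>{0<..<1}. \<omega> \<le> s}"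
proof -
  consider "1 \<le> s" | "0 < s" "s < 1" | "s \<le> 0" by linarith
  then show ?thesis
  proof cases
    case 1
    have "{\<omega>\<in>{0<..<1}. Rf \<omega> \<le> s} = {\<omega>\<in>{0<..<1}. \<omega> \<le> s}"
    proof -
      have "Rf \<omega> \<le> s" if "\<omega> \<in> {0<..<1}" for \<omega> using Rf_le[OF that] qb_le1[of \<omega>] 1 by linarith
      then show ?thesis using 1 by auto
    qed
    then show ?thesis by simp
  next
    case 2
    have "measure lborel {\<omega>\<in>{0<..<1}. Rf \<omega> \<le> s} = s"
      using key_s[OF 2] 2 by (simp add: measure_def)
    moreover have "{\<omega>\<in>{0<..<1}. \<omega> \<le> s} = {0<..s}" using 2 by auto
    ultimately show ?thesis using 2 by simp
  next
    case 3
    let ?S = "{\<omega>\<in>{0<..<1}. Rf \<omega> \<le> s}"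
    have "emeasure lborel ?S \<le> 0"
    proof (rule ennreal_le_epsilon)
      fix e :: real assume e: "0 < e"
      define s' where "s' = min e (1/2)"
      have s': "0 < s'" "s' < 1" "s' \<le> e" using e unfolding s'_def by auto
      have "emeasure lborel ?S \<le> emeasure lborel {\<omega>\<in>{0<..<1}. Rf \<omega> \<le> s'}"
        by (rule emeasure_mono) (use 3 s' Lam_set_le[OF measurable_Rf] in auto)
      also have "\<dots> = ennreal s'" by (rule key_s[OF s'(1,2)])
      also have "\<dots> \<le> 0 + ennreal e" using s' by simp
      finally show "emeasure lborel ?S \<le> 0 + ennreal e" .
    qed
    then have "measure lborel ?S = 0" by (simp add: measure_def)
    moreover have "{\<omega>\<in>{0<..<1}. \<omega> \<le> s} = {}" using 3 by auto
    ultimately show ?thesis by (metis measure_empty)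
  qed
qed

lemma distr_Rf: "distr Lam borel Rf = distr Lam borel (\<lambda>x. x)"
proof (rule cdf_unique)
  show "real_distribution (distr Lam borel Rf)" by (rule real_distribution_distr_Lam) simp
  show "real_distribution (distr Lam borel (\<lambda>x. x))" by (rule real_distribution_distr_Lam) simp
  show "cdf (distr Lam borel Rf) = cdf (distr Lam borel (\<lambda>x. x))"
    by (rule ext) (simp only: cdf_distr_Lam[OF measurable_Rf] cdf_distr_Lam[OF measurable_id_Lam] Rf_cdf)
qed

lemma integral_Rf:
  fixes g :: "real \<Rightarrow> real"
  assumes g: "g \<in> borel_measurable borel"
  shows "integral\<^sup>L Lam (\<lambda>\<omega>. g (Rf \<omega>)) = integral\<^sup>L Lam g"
proof -
  have "integral\<^sup>L Lam (\<lambda>\<omega>. g (Rf \<omega>)) = integral\<^sup>L (distr Lam borel Rf) g"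
    by (rule integral_distr[symmetric]) (simp_all add: g)
  also have "\<dots> = integral\<^sup>L (distr Lam borel (\<lambda>x. x)) g" by (simp add: distr_Rf)
  also have "\<dots> = integral\<^sup>L Lam (\<lambda>x. g x)"
    by (rule integral_distr) (simp_all add: g)
  finally show ?thesis by simp
qed

lemma integrable_Rf:
  fixes g :: "real \<Rightarrow> real"
  assumes g: "g \<in> borel_measurable borel" and i: "integrable Lam g"
  shows "integrable Lam (\<lambda>\<omega>. g (Rf \<omega>))"
proof -
  have "integrable (distr Lam borel (\<lambda>x. x)) g"
    using i by (subst integrable_distr_eq) (simp_all add: g)
  then have "integrable (distr Lam borel Rf) g" by (simp add: distr_Rf)
  then show ?thesis by (subst (asm) integrable_distr_eq) (simp_all add: g)
qed


definition Jf where "Jf \<omega> = (qa \<omega> + qb \<omega>) / 2"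

lemma measurable_Jf[measurable]: "Jf \<in> borel_measurable Lam"
  unfolding Jf_def by measurable

lemma Jf_Rf: "Jf \<omega> = (1 - 1/2) *\<^sub>R \<omega> + (1/2) *\<^sub>R Rf \<omega>"
  unfolding Jf_def Rf_def by (simp add: field_simps)

lemma qa_le1: "qa \<omega> \<le> 1" unfolding qa_def by (rule prob_le_1)
lemma qb_nonneg: "0 \<le> qb \<omega>" unfolding qb_def by (rule cdf_nonneg)

lemma Jf_01: "Jf \<omega> \<in> {0..1}"
  using qa_nonneg[of \<omega>] qb_le1[of \<omega>] qa_le1[of \<omega>] qb_nonneg[of \<omega>] unfolding Jf_def
  by simp

lemma Jf_sub:
  fixes h :: "real \<Rightarrow> real"
  assumes h: "convex_on UNIV h"
  shows "integrable Lam (\<lambda>\<omega>. h (Jf \<omega>))" "integral\<^sup>L Lam (\<lambda>\<omega>. h (Jf \<omega>)) \<le> integral\<^sup>L Lam h"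
proof -
  have hm: "h \<in> borel_measurable borel"
    by (rule borel_measurable_continuous_onI, rule convex_on_continuous[OF _ h]) simp
  obtain B where B: "\<And>y. y \<in> {0..1} \<Longrightarrow> \<bar>h y\<bar> \<le> B" using convex_bounded01[OF h] by blast
  show i1: "integrable Lam (\<lambda>\<omega>. h (Jf \<omega>))"
    by (rule integrable_Lam_bounded[where B=B], rule measurable_compose[OF measurable_Jf hm], rule B[OF Jf_01])
  have hL: "h \<in> borel_measurable Lam" using measurable_compose[OF measurable_id_Lam hm] by simp
  have i2: "integrable Lam h"
    by (rule integrable_Lam_bounded[where B=B]) (auto simp: hL intro!: B)
  have i3: "integrable Lam (\<lambda>\<omega>. h (Rf \<omega>))" by (rule integrable_Rf[OF hm i2])
  have "integral\<^sup>L Lam (\<lambda>\<omega>. h (Jf \<omega>)) \<le> integral\<^sup>L Lam (\<lambda>\<omega>. (1/2) * h \<omega> + (1/2) * h (Rf \<omega>))"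
  proof (rule integral_mono[OF i1])
    show "integrable Lam (\<lambda>\<omega>. (1/2) * h \<omega> + (1/2) * h (Rf \<omega>))" using i2 i3 by simp
    fix \<omega> show "h (Jf \<omega>) \<le> (1/2) * h \<omega> + (1/2) * h (Rf \<omega>)"
      using convex_onD[OF h, of "1/2" \<omega> "Rf \<omega>"] unfolding Jf_Rf by simp
  qed
  also have "\<dots> = (1/2) * integral\<^sup>L Lam h + (1/2) * integral\<^sup>L Lam (\<lambda>\<omega>. h (Rf \<omega>))"
    using i2 i3 by simp
  also have "\<dots> = integral\<^sup>L Lam h" by (simp add: integral_Rf[OF hm])
  finally show "integral\<^sup>L Lam (\<lambda>\<omega>. h (Jf \<omega>)) \<le> integral\<^sup>L Lam h" .
qed

lemma Jf_nostraddle: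
  assumes ns: "\<And>\<omega>. \<omega> \<in> {0<..<1} \<Longrightarrow> \<not> (qa \<omega> < c \<and> c < qb \<omega>)"
  shows "integral\<^sup>L Lam (\<lambda>\<omega>. max (c - Jf \<omega>) 0) = integral\<^sup>L Lam (\<lambda>\<omega>. max (c - \<omega>) 0)"
proof -
  let ?f = "\<lambda>y::real. max (c - y) 0"
  have fm: "?f \<in> borel_measurable borel" by measurable
  have i2: "integrable Lam ?f"
    by (rule integrable_Lam_bounded[where B="\<bar>c\<bar> + 1"]) auto
  have i3: "integrable Lam (\<lambda>\<omega>. ?f (Rf \<omega>))" by (rule integrable_Rf[OF fm i2])
  have "integral\<^sup>L Lam (\<lambda>\<omega>. ?f (Jf \<omega>)) = integral\<^sup>L Lam (\<lambda>\<omega>. (1/2) * ?f \<omega> + (1/2) * ?f (Rf \<omega>))"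
  proof (rule Bochner_Integration.integral_cong[OF refl])
    fix \<omega> assume "\<omega> \<in> space Lam"
    then have wO: "\<omega> \<in> {0<..<1}" by simp
    have r: "qa \<omega> \<le> \<omega>" "\<omega> \<le> qb \<omega>" "qa \<omega> \<le> Rf \<omega>" "Rf \<omega> \<le> qb \<omega>"
      using qa_le[OF wO] le_qb[OF wO] Rf_ge[OF wO] Rf_le[OF wO] by auto
    have J: "Jf \<omega> = (\<omega> + Rf \<omega>) / 2" unfolding Jf_def Rf_def by simp
    have J2: "2 * Jf \<omega> = \<omega> + Rf \<omega>" unfolding Jf_def Rf_def by simp
    have "c \<le> qa \<omega> \<or> qb \<omega> \<le> c" using ns[OF wO] by linarith
    then show "?f (Jf \<omega>) = (1/2) * ?f \<omega> + (1/2) * ?f (Rf \<omega>)"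
    proof
      assume "c \<le> qa \<omega>"
      then have "c \<le> \<omega>" "c \<le> Rf \<omega>" "c \<le> Jf \<omega>" using r J2 by linarith+
      then show ?thesis by simp
    next
      assume "qb \<omega> \<le> c"
      then have "\<omega> \<le> c" "Rf \<omega> \<le> c" "Jf \<omega> \<le> c" using r J2 by linarith+
      then have e: "max (c - \<omega>) 0 = c - \<omega>" "max (c - Rf \<omega>) 0 = c - Rf \<omega>" "max (c - Jf \<omega>) 0 = c - Jf \<omega>"
        by auto
      show ?thesis unfolding e using J by (simp add: field_simps)
    qed
  qed
  also have "\<dots> = (1/2) * integral\<^sup>L Lam ?f + (1/2) * integral\<^sup>L Lam (\<lambda>\<omega>. ?f (Rf \<omega>))"
    using i2 i3 by simp
  also have "\<dots> = integral\<^sup>L Lam ?f" by (simp add: integral_Rf[OF fm])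
  finally show ?thesis .
qed

end


lemma convex_pos: "convex_on UNIV (\<lambda>w::real. max (c - w) 0)"
proof (rule convex_onI)
  fix t x y :: real assume t: "0 < t" "t < 1"
  have a: "(1 - t) * (c - x) \<le> (1 - t) * max (c - x) 0" by (rule mult_left_mono) (use t in auto)
  have b: "t * (c - y) \<le> t * max (c - y) 0" by (rule mult_left_mono) (use t in auto)
  have c: "0 \<le> (1 - t) * max (c - x) 0" "0 \<le> t * max (c - y) 0" using t by auto
  have "c - ((1 - t) * x + t * y) = (1 - t) * (c - x) + t * (c - y)" by (simp add: algebra_simps)
  then show "max (c - ((1 - t) *\<^sub>R x + t *\<^sub>R y)) 0 \<le> (1 - t) * max (c - x) 0 + t * max (c - y) 0"
    using a b c by simp
qed simp

lemma unif01_eq: "unif01 = distr Lam borel (\<lambda>x. x)"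
proof (rule cdf_unique)
  have e1: "emeasure lborel {0..1::real} = 1" by simp
  show "real_distribution unif01" unfolding unif01_def real_distribution_def
    using prob_space_uniform_measure[of lborel "{0..1::real}"] e1 by (simp add: real_distribution_axioms_def)
  show "real_distribution (distr Lam borel (\<lambda>x. x))" by (rule real_distribution_distr_Lam) simp
  show "cdf unif01 = cdf (distr Lam borel (\<lambda>x. x))"
  proof
    fix s :: real
    have "cdf unif01 s = measure lborel ({0..1} \<inter> {..s})"
      unfolding unif01_def cdf_def using e1 by simp
    also have "\<dots> = measure lborel {\<omega>\<in>{0<..<1}. \<omega> \<le> s}"
    proof -
      consider "s < 0" | "0 \<le> s" "s < 1" | "1 \<le> s" by linarith
      then show ?thesis
      proof cases
        case 1
        then have "{0..1} \<inter> {..s} = {}" "{\<omega>\<in>{0<..<1::real}. \<omega> \<le> s} = {}" by auto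
        then show ?thesis by (metis)
      next
        case 2
        then have "{0..1} \<inter> {..s} = {0..s}" "{\<omega>\<in>{0<..<1::real}. \<omega> \<le> s} = {0<..s}" by auto
        then show ?thesis using 2 by simp
      next
        case 3
        then have "{0..1} \<inter> {..s} = {0..1}" "{\<omega>\<in>{0<..<1::real}. \<omega> \<le> s} = {0<..<1}" by auto
        then show ?thesis by simp
      qed
    qed
    also have "\<dots> = cdf (distr Lam borel (\<lambda>x. x)) s"
      by (rule cdf_distr_Lam[symmetric]) (subst measurable_cong_sets[OF sets_Lam refl], rule measurable_restrict_space1, simp)
    finally show "cdf unif01 s = cdf (distr Lam borel (\<lambda>x. x)) s" .
  qed
qed

lemma integral_unif01:
  fixes g :: "real \<Rightarrow> real"
  assumes "g \<in> borel_measurable borel"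
  shows "integral\<^sup>L unif01 g = integral\<^sup>L Lam g"
proof -
  have m: "(\<lambda>x::real. x) \<in> measurable Lam borel"
    by (subst measurable_cong_sets[OF sets_Lam refl], rule measurable_restrict_space1, simp)
  show ?thesis unfolding unif01_eq by (subst integral_distr[OF m assms]) simp
qed

lemma coupling:
  assumes L: "real_distribution L" and W: "real_distribution W"
    and le: "\<And>y. y < x \<Longrightarrow> cdf L y \<le> cdf W y"
    and iL: "integrable L (\<lambda>y. max (x - y) 0)" and iW: "integrable W (\<lambda>y. max (x - y) 0)"
  shows "integral\<^sup>L L (\<lambda>y. max (x - y) 0) \<le> integral\<^sup>L W (\<lambda>y. max (x - y) 0)"
proof -
  have cL: "cdf_distribution L" and cW: "cdf_distribution W" using L W by (simp_all add: cdf_distribution_def)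
  let ?IL = "\<lambda>\<omega>. Inf {t. \<omega> \<le> cdf L t}"
  let ?IW = "\<lambda>\<omega>. Inf {t. \<omega> \<le> cdf W t}"
  let ?f = "\<lambda>y::real. max (x - y) 0"
  have fm: "?f \<in> borel_measurable borel" by measurable
  have mL: "?IL \<in> measurable Lam borel" by (rule cdf_distribution.measurable_Lam_I[OF cL])
  have mW: "?IW \<in> measurable Lam borel" by (rule cdf_distribution.measurable_Lam_I[OF cW])
  have dL: "distr Lam borel ?IL = L" by (rule cdf_distribution.distr_I_eq_M[OF cL])
  have dW: "distr Lam borel ?IW = W" by (rule cdf_distribution.distr_I_eq_M[OF cW])
  have "integral\<^sup>L L ?f = integral\<^sup>L Lam (\<lambda>\<omega>. ?f (?IL \<omega>))"
    by (subst dL[symmetric], rule integral_distr[OF mL fm])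
  also have "\<dots> \<le> integral\<^sup>L Lam (\<lambda>\<omega>. ?f (?IW \<omega>))"
  proof (rule integral_mono)
    show "integrable Lam (\<lambda>\<omega>. ?f (?IL \<omega>))"
      using iL by (subst (asm) dL[symmetric], subst (asm) integrable_distr_eq[OF mL fm])
    show "integrable Lam (\<lambda>\<omega>. ?f (?IW \<omega>))"
      using iW by (subst (asm) dW[symmetric], subst (asm) integrable_distr_eq[OF mW fm])
    fix \<omega> assume "\<omega> \<in> space Lam"
    then have wO: "\<omega> \<in> {0<..<1}" by simp
    show "?f (?IL \<omega>) \<le> ?f (?IW \<omega>)"
    proof (cases "?IL \<omega> < x")
      case True
      have "\<omega> \<le> cdf L (?IL \<omega>)" using cdf_distribution.pinv[OF cL wO, of "?IL \<omega>"] by simp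
      also have "\<dots> \<le> cdf W (?IL \<omega>)" using le[OF True] .
      finally have "?IW \<omega> \<le> ?IL \<omega>" using cdf_distribution.pinv[OF cW wO, of "?IL \<omega>"] by simp
      then show ?thesis by simp
    next
      case False then show ?thesis by simp
    qed
  qed
  also have "\<dots> = integral\<^sup>L W ?f"
    by (subst dW[symmetric], rule integral_distr[OF mW fm, symmetric])
  finally show ?thesis .
qed

lemma agree_le:
  assumes L: "real_distribution L" and W: "real_distribution W" and x: "x \<in> supp L"
    and ag: "\<forall>y\<in>supp L \<inter> {0..<x}. cdf W y = cdf L y"
    and neg: "\<And>z. z < 0 \<Longrightarrow> cdf L z = 0" and y: "y < x"
  shows "cdf L y \<le> cdf W y"
proof -
  interpret WW: real_distribution W by (rule W)
  show ?thesis
proof (cases "cdf L y = 0")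
  case True then show ?thesis using WW.cdf_nonneg[of y] by simp
next
  case False
  interpret LL: real_distribution L by (rule L)
  have cL: "cdf_distribution L" using L by (simp add: cdf_distribution_def)
  let ?w = "cdf L y"
  have pos: "0 < ?w" using False LL.cdf_nonneg[of y] by simp
  have sx: "\<And>e. 0 < e \<Longrightarrow> 0 < measure L {x - e<..<x + e}" using x unfolding supp_def by blast
  have "0 < measure L {x - (x - y)<..<x + (x - y)}" by (rule sx) (use y in simp)
  also have "\<dots> \<le> measure L {y<..}" by (rule LL.finite_measure_mono) auto
  also have "\<dots> = 1 - ?w"
  proof -
    have "measure L (space L - {..y}) = 1 - measure L {..y}" by (rule LL.prob_compl) simp
    moreover have "space L - {..y} = {y<..}" by auto
    ultimately show ?thesis by (simp add: cdf_def)
  qed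
  finally have lt1: "?w < 1" by simp
  have wO: "?w \<in> {0<..<1}" using pos lt1 by simp
  define z where "z = Inf {t. ?w \<le> cdf L t}"
  have pz: "?w \<le> cdf L t \<longleftrightarrow> z \<le> t" for t
    unfolding z_def by (rule cdf_distribution.pinv[OF cL wO])
  have zy: "z \<le> y" using pz[of y] by simp
  have "?w \<le> cdf L z" using pz[of z] by simp
  moreover have "cdf L z \<le> ?w" using LL.cdf_nondecreasing[OF zy] .
  ultimately have cz: "cdf L z = ?w" by simp
  have z0: "0 \<le> z"
  proof (rule ccontr)
    assume "\<not> 0 \<le> z" then have "cdf L z = 0" using neg by simp
    with cz pos show False by simp
  qed
  have zs: "z \<in> supp L"
    unfolding supp_def
  proof (intro CollectI allI impI)
    fix e :: real assume e: "0 < e"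
    have "cdf L (z - e/2) < ?w" using pz[of "z - e/2"] e by simp
    then have "0 < cdf L z - cdf L (z - e/2)" using cz by simp
    also have "\<dots> = measure L {z - e/2<..z}" by (rule LL.cdf_diff_eq) (use e in simp)
    also have "\<dots> \<le> measure L {z - e<..<z + e}" by (rule LL.finite_measure_mono) (use e in auto)
    finally show "0 < measure L {z - e<..<z + e}" .
  qed
  have "cdf W z = cdf L z" using ag zs z0 zy y by auto
  moreover have "cdf W z \<le> cdf W y" by (rule WW.cdf_nondecreasing[OF zy])
  ultimately show ?thesis using cz by simp
qed
qed


abbreviation pos :: "real \<Rightarrow> real \<Rightarrow> real" where "pos c y \<equiv> max (c - y) 0"

lemma sub_uniform_facts:
  assumes W: "sub_uniform W"
  shows "real_distribution W" "integrable W (pos c)" "integral\<^sup>L W (pos c) \<le> integral\<^sup>L Lam (pos c)"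
proof -
  show "real_distribution W" using W unfolding sub_uniform_def real_distribution_def real_distribution_axioms_def by simp
  have "integrable W (pos c) \<and> integral\<^sup>L W (pos c) \<le> integral\<^sup>L unif01 (pos c)"
    using W convex_pos[of c] unfolding sub_uniform_def by blast
  moreover have "integral\<^sup>L unif01 (pos c) = integral\<^sup>L Lam (pos c)" by (rule integral_unif01) simp
  ultimately show "integrable W (pos c)" "integral\<^sup>L W (pos c) \<le> integral\<^sup>L Lam (pos c)" by simp_all
qed

lemma Wstep:
  assumes W: "real_distribution W" and iW: "integrable W (pos x)" "integrable W (pos c)" and xc: "x < c"
  shows "integral\<^sup>L W (pos x) + (c - x) * cdf W x \<le> integral\<^sup>L W (pos c)"
proof -
  interpret WW: real_distribution W by (rule W)
  have ii: "integrable W (indicator {..x} :: real \<Rightarrow> real)"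
    by (rule integrable_real_indicator) (simp_all add: less_top[symmetric] WW.emeasure_finite)
  have "integral\<^sup>L W (pos x) + (c - x) * cdf W x = integral\<^sup>L W (\<lambda>y. pos x y + (c - x) * indicator {..x} y)"
    using iW ii by (simp add: cdf_def)
  also have "\<dots> \<le> integral\<^sup>L W (pos c)"
  proof (rule integral_mono)
    show "integrable W (\<lambda>y. pos x y + (c - x) * indicator {..x} y)" using iW ii by simp
    show "integrable W (pos c)" by (rule iW)
    fix y show "pos x y + (c - x) * indicator {..x} y \<le> pos c y"
      using xc by (cases "y \<le> x") (auto simp: indicator_def)
  qed
  finally show ?thesis .
qed

context cdf_distribution
begin

lemma RL: "real_distribution (distr Lam borel Jf)" by (rule real_distribution_distr_Lam) simp

lemma L_sub: "sub_uniform (distr Lam borel Jf)"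
  unfolding sub_uniform_def
proof (intro conjI allI impI)
  show "prob_space (distr Lam borel Jf)" using RL by (simp add: real_distribution_def)
  show "sets (distr Lam borel Jf) = sets borel" by simp
  fix h :: "real \<Rightarrow> real" assume h: "convex_on UNIV h"
  have hm: "h \<in> borel_measurable borel"
    by (rule borel_measurable_continuous_onI, rule convex_on_continuous[OF _ h]) simp
  show "integrable (distr Lam borel Jf) h"
    by (subst integrable_distr_eq) (simp_all add: hm Jf_sub(1)[OF h])
  have "integral\<^sup>L (distr Lam borel Jf) h = integral\<^sup>L Lam (\<lambda>\<omega>. h (Jf \<omega>))"
    by (rule integral_distr) (simp_all add: hm)
  also have "\<dots> \<le> integral\<^sup>L Lam h" by (rule Jf_sub(2)[OF h])
  also have "\<dots> = integral\<^sup>L unif01 h" by (rule integral_unif01[symmetric, OF hm])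
  finally show "integral\<^sup>L (distr Lam borel Jf) h \<le> integral\<^sup>L unif01 h" .
qed

lemma measL: "A \<in> sets borel \<Longrightarrow> measure (distr Lam borel Jf) A = measure Lam {\<omega>\<in>{0<..<1}. Jf \<omega> \<in> A}"
  by (subst measure_distr) (auto intro!: arg_cong[where f="measure Lam"])

lemma Jf_ge_qa: "\<omega> \<in> {0<..<1} \<Longrightarrow> qa \<omega> \<le> Jf \<omega>"
  using qa_le[of \<omega>] le_qb[of \<omega>] unfolding Jf_def by simp
lemma Jf_le_qb: "\<omega> \<in> {0<..<1} \<Longrightarrow> Jf \<omega> \<le> qb \<omega>"
  using qa_le[of \<omega>] le_qb[of \<omega>] unfolding Jf_def by simp

lemma int_L_pos: "integrable (distr Lam borel Jf) (pos c)"
  "integral\<^sup>L (distr Lam borel Jf) (pos c) = integral\<^sup>L Lam (\<lambda>\<omega>. pos c (Jf \<omega>))"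
proof -
  have i: "integrable Lam (\<lambda>\<omega>. pos c (Jf \<omega>))"
  proof (rule integrable_Lam_bounded[where B="\<bar>c\<bar> + 1"])
    fix \<omega> :: real
    have "0 \<le> Jf \<omega>" using Jf_01[of \<omega>] by simp
    then show "\<bar>pos c (Jf \<omega>)\<bar> \<le> \<bar>c\<bar> + 1" by (auto simp: max_def)
  qed simp
  show "integrable (distr Lam borel Jf) (pos c)" by (subst integrable_distr_eq) (simp_all add: i)
  show "integral\<^sup>L (distr Lam borel Jf) (pos c) = integral\<^sup>L Lam (\<lambda>\<omega>. pos c (Jf \<omega>))"
    by (rule integral_distr) simp_all
qed


lemma cdfL: "cdf (distr Lam borel Jf) y = measure Lam {\<omega>\<in>{0<..<1}. Jf \<omega> \<le> y}"
  unfolding cdf_def by (subst measL) auto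

lemma nullL:
  assumes "\<And>\<omega>. \<omega> \<in> {0<..<1} \<Longrightarrow> \<not> (a < Jf \<omega> \<and> Jf \<omega> < b)"
  shows "measure (distr Lam borel Jf) {a<..<b} = 0"
proof -
  have e: "{\<omega>\<in>{0<..<1}. Jf \<omega> \<in> {a<..<b}} = {}" using assms by auto
  have "measure (distr Lam borel Jf) {a<..<b} = measure Lam {\<omega>\<in>{0<..<1}. Jf \<omega> \<in> {a<..<b}}"
    by (rule measL) simp
  also have "\<dots> = 0" unfolding e by simp
  finally show ?thesis .
qed

lemma main_bound:
  assumes W: "sub_uniform W" and x: "x \<in> supp (distr Lam borel Jf)"
    and ag: "\<forall>y\<in>supp (distr Lam borel Jf) \<inter> {0..<x}. cdf W y = cdf (distr Lam borel Jf) y"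
  shows "cdf W x \<le> cdf (distr Lam borel Jf) x"
proof -
  define L where "L = distr Lam borel Jf"
  interpret LP: prob_space Lam by (rule prob_space_Lam)
  have RW: "real_distribution W" by (rule sub_uniform_facts(1)[OF W])
  interpret WW: real_distribution W by (rule RW)
  have sx: "\<And>e. 0 < e \<Longrightarrow> 0 < measure L {x - e<..<x + e}" using x unfolding supp_def L_def by blast
  have neg: "cdf L z = 0" if "z < 0" for z
  proof -
    have e: "{\<omega>\<in>{0<..<1}. Jf \<omega> \<le> z} = {}" using Jf_01 that by (auto simp: not_le intro: less_le_trans)
    show ?thesis unfolding L_def cdfL e by simp
  qed
  have le_all: "cdf L y \<le> cdf W y" if "y < x" for y
    by (rule agree_le[OF RL[folded L_def] RW x[folded L_def] ag[folded L_def] neg that])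
  have coup: "integral\<^sup>L L (pos x) \<le> integral\<^sup>L W (pos x)"
    unfolding L_def
    by (rule coupling[OF RL RW le_all[unfolded L_def] int_L_pos(1) sub_uniform_facts(2)[OF W]])
  have x0: "0 \<le> x"
  proof (rule ccontr)
    assume "\<not> 0 \<le> x"
    have "measure L {x - (- x)<..<x + (- x)} = 0"
      unfolding L_def
    proof (rule nullL)
      fix \<omega> :: real
      have "0 \<le> Jf \<omega>" using Jf_01[of \<omega>] by simp
      then show "\<not> (x - - x < Jf \<omega> \<and> Jf \<omega> < x + - x)" using \<open>\<not> 0 \<le> x\<close> by simp
    qed
    moreover have "0 < measure L {x - (- x)<..<x + (- x)}" by (rule sx) (use \<open>\<not> 0 \<le> x\<close> in simp)
    ultimately show False by simp
  qed
  show ?thesis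
  proof (cases "1 \<le> x")
    case True
    have "{\<omega>\<in>{0<..<1}. Jf \<omega> \<le> x} = space Lam" using Jf_01 True by (auto intro: order_trans)
    then have "cdf L x = 1" unfolding L_def cdfL by (metis LP.prob_space)
    then show ?thesis using WW.cdf_bounded_prob[of x] unfolding L_def by simp
  next
    case False
    then have x1: "x < 1" by simp
    show ?thesis
    proof (cases "\<exists>\<omega>0\<in>{0<..<1}. qa \<omega>0 < x \<and> x < qb \<omega>0")
      case False
      then have ns: "\<And>\<omega>. \<omega> \<in> {0<..<1} \<Longrightarrow> \<not> (qa \<omega> < x \<and> x < qb \<omega>)" by blast
      have A: "integral\<^sup>L L (pos x) = integral\<^sup>L Lam (pos x)"
        unfolding L_def int_L_pos(2) by (rule Jf_nostraddle[OF ns])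
      have ipos: "integrable Lam (pos c)" for c
        by (rule integrable_Lam_bounded[where B="\<bar>c\<bar> + 1"]) auto
      have bnd: "cdf W x \<le> c" if c: "x < c" "c < 1" for c
      proof -
        have "(c - x) * cdf W x \<le> integral\<^sup>L W (pos c) - integral\<^sup>L W (pos x)"
          using Wstep[OF RW sub_uniform_facts(2)[OF W] sub_uniform_facts(2)[OF W] c(1)] by simp
        also have "\<dots> \<le> integral\<^sup>L Lam (pos c) - integral\<^sup>L Lam (pos x)"
          using sub_uniform_facts(3)[OF W, of c] coup A by simp
        also have "\<dots> = integral\<^sup>L Lam (\<lambda>\<omega>. pos c \<omega> - pos x \<omega>)"
          using ipos by simp
        also have "\<dots> \<le> integral\<^sup>L Lam (\<lambda>\<omega>. (c - x) * indicator {0<..c} \<omega>)"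
        proof (rule integral_mono)
          show "integrable Lam (\<lambda>\<omega>. pos c \<omega> - pos x \<omega>)" using ipos by simp
          have "{0<..c} \<in> sets Lam"
            using c x0 by (subst sets_restrict_space_iff) auto
          then show "integrable Lam (\<lambda>\<omega>. (c - x) * indicator {0<..c} \<omega>)"
            by (intro integrable_mult_right integrable_real_indicator) (simp_all add: less_top[symmetric] LP.emeasure_finite)
          fix \<omega> assume "\<omega> \<in> space Lam"
          then show "pos c \<omega> - pos x \<omega> \<le> (c - x) * indicator {0<..c} \<omega>"
            using c by (cases "\<omega> \<le> c") (auto simp: indicator_def max_def)
        qed
        also have "\<dots> = (c - x) * measure Lam ({0<..c} \<inter> {0<..<1})" by simp
        also have "{0<..c} \<inter> {0<..<1} = {0<..c}" using c by auto
        also have "measure Lam {0<..c} = c" using c x0 by (subst measure_Lam) auto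
        finally have "(c - x) * cdf W x \<le> (c - x) * c" .
        then show ?thesis using c by simp
      qed
      have "cdf W x \<le> x" by (rule dense_ge_bounded[OF x1 bnd]) simp_all
      also have "x \<le> cdf L x"
      proof -
        have sub: "{0<..<x} \<subseteq> {\<omega>\<in>{0<..<1}. Jf \<omega> \<le> x}"
        proof
          fix \<omega> assume w: "\<omega> \<in> {0<..<x}"
          then have wO: "\<omega> \<in> {0<..<1}" using x1 by auto
          have "qb \<omega> \<le> x"
          proof (rule ccontr)
            assume "\<not> qb \<omega> \<le> x"
            then have "x \<le> qa \<omega>" using ns[OF wO] by simp
            then show False using qa_le[OF wO] w by simp
          qed
          then show "\<omega> \<in> {\<omega>\<in>{0<..<1}. Jf \<omega> \<le> x}" using Jf_le_qb[OF wO] wO by simp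
        qed
        have "x = measure Lam {0<..<x}" using x0 x1 by (subst measure_Lam) auto
        also have "\<dots> \<le> measure Lam {\<omega>\<in>{0<..<1}. Jf \<omega> \<le> x}"
        proof (rule LP.finite_measure_mono[OF sub])
          have "Jf -` {..x} \<inter> space Lam \<in> sets Lam" by (rule measurable_sets[OF measurable_Jf]) simp
          moreover have "Jf -` {..x} \<inter> space Lam = {\<omega>\<in>{0<..<1}. Jf \<omega> \<le> x}" by auto
          ultimately show "{\<omega>\<in>{0<..<1}. Jf \<omega> \<le> x} \<in> sets Lam" by metis
        qed
        also have "\<dots> = cdf L x" unfolding L_def cdfL ..
        finally show ?thesis .
      qed
      finally show ?thesis unfolding L_def .
    next
      case True
      then obtain \<omega>0 where w0: "\<omega>0 \<in> {0<..<1}" "qa \<omega>0 < x" "x < qb \<omega>0" by blast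
      define \<alpha> where "\<alpha> = qa \<omega>0"
      define \<beta> where "\<beta> = qb \<omega>0"
      have ax: "\<alpha> < x" and xb: "x < \<beta>" using w0 unfolding \<alpha>_def \<beta>_def by simp_all
      have Jw0: "Jf \<omega>0 = (\<alpha> + \<beta>) / 2" unfolding Jf_def \<alpha>_def \<beta>_def ..
      have trich: "Jf \<omega> \<le> \<alpha> \<or> Jf \<omega> = (\<alpha> + \<beta>) / 2 \<or> \<beta> \<le> Jf \<omega>" if wO: "\<omega> \<in> {0<..<1}" for \<omega>
      proof -
        consider "I \<omega> < I \<omega>0" | "I \<omega> = I \<omega>0" | "I \<omega>0 < I \<omega>" by linarith
        then show ?thesis
        proof cases
          case 1
          then have "qb \<omega> \<le> \<alpha>" unfolding \<alpha>_def by (rule qb_le_qa)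
          then show ?thesis using Jf_le_qb[OF wO] by simp
        next
          case 2
          then have "Jf \<omega> = Jf \<omega>0" unfolding Jf_def qa_def qb_def by simp
          then show ?thesis using Jw0 by simp
        next
          case 3
          then have "\<beta> \<le> qa \<omega>" unfolding \<beta>_def by (rule qb_le_qa)
          then show ?thesis using Jf_ge_qa[OF wO] by simp
        qed
      qed
      have xmid: "x = (\<alpha> + \<beta>) / 2"
      proof (rule ccontr)
        assume ne: "x \<noteq> (\<alpha> + \<beta>) / 2"
        define e where "e = (if x < (\<alpha> + \<beta>) / 2 then min (x - \<alpha>) ((\<alpha> + \<beta>) / 2 - x)
                                else min (x - (\<alpha> + \<beta>) / 2) (\<beta> - x))"
        have e0: "0 < e" using ne ax xb unfolding e_def by auto
        have "measure L {x - e<..<x + e} = 0"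
          unfolding L_def
        proof (rule nullL)
          fix \<omega> :: real assume wO: "\<omega> \<in> {0<..<1}"
          have t: "Jf \<omega> \<le> \<alpha> \<or> Jf \<omega> = (\<alpha> + \<beta>) / 2 \<or> \<beta> \<le> Jf \<omega>" by (rule trich[OF wO])
          have h2: "2 * ((\<alpha> + \<beta>) / 2) = \<alpha> + \<beta>" by simp
          show "\<not> (x - e < Jf \<omega> \<and> Jf \<omega> < x + e)"
          proof (cases "x < (\<alpha> + \<beta>) / 2")
            case True
            then have "e \<le> x - \<alpha>" "e \<le> (\<alpha> + \<beta>) / 2 - x" unfolding e_def by auto
            with t True xb ax h2 show ?thesis by (elim disjE) linarith+
          next
            case False
            then have "e \<le> x - (\<alpha> + \<beta>) / 2" "e \<le> \<beta> - x" unfolding e_def by auto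
            with t False ne ax h2 show ?thesis by (elim disjE) linarith+
          qed
        qed
        with sx[OF e0] show False by simp
      qed
      have nsb: "\<not> (qa \<omega> < \<beta> \<and> \<beta> < qb \<omega>)" if wO: "\<omega> \<in> {0<..<1}" for \<omega>
      proof -
        consider "I \<omega> < I \<omega>0" | "I \<omega> = I \<omega>0" | "I \<omega>0 < I \<omega>" by linarith
        then show ?thesis
        proof cases
          case 1
          then have "qb \<omega> \<le> \<alpha>" unfolding \<alpha>_def by (rule qb_le_qa)
          then show ?thesis using ax xb by simp
        next
          case 2
          then have "qb \<omega> = \<beta>" unfolding \<beta>_def qb_def by simp
          then show ?thesis by simp
        next
          case 3
          then have "\<beta> \<le> qa \<omega>" unfolding \<beta>_def by (rule qb_le_qa)
          then show ?thesis by simp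
        qed
      qed
      have ind_int: "integrable Lam (\<lambda>\<omega>. indicator {..x} (Jf \<omega>) :: real)"
        by (rule integrable_Lam_bounded[where B=1]) (auto simp: indicator_def)
      have ind_eq: "integral\<^sup>L Lam (\<lambda>\<omega>. indicator {..x} (Jf \<omega>) :: real) = cdf L x"
      proof -
        have "integral\<^sup>L Lam (\<lambda>\<omega>. indicator {..x} (Jf \<omega>) :: real) = integral\<^sup>L L (indicator {..x})"
          unfolding L_def by (rule integral_distr[symmetric]) simp_all
        also have "\<dots> = measure L {..x}" by (simp add: L_def)
        finally show ?thesis by (simp add: cdf_def)
      qed
      have iJ: "integrable Lam (\<lambda>\<omega>. pos x (Jf \<omega>))"
        using int_L_pos(1)[of x] by (subst (asm) integrable_distr_eq) simp_all
      have "integral\<^sup>L Lam (pos \<beta>) = integral\<^sup>L Lam (\<lambda>\<omega>. pos \<beta> (Jf \<omega>))"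
        by (rule Jf_nostraddle[OF nsb, symmetric])
      also have "\<dots> = integral\<^sup>L Lam (\<lambda>\<omega>. pos x (Jf \<omega>) + (\<beta> - x) * indicator {..x} (Jf \<omega>))"
      proof (rule Bochner_Integration.integral_cong[OF refl])
        fix \<omega> assume "\<omega> \<in> space Lam"
        then have wO: "\<omega> \<in> {0<..<1}" by simp
        show "pos \<beta> (Jf \<omega>) = pos x (Jf \<omega>) + (\<beta> - x) * indicator {..x} (Jf \<omega>)"
          using trich[OF wO] xmid ax xb by (auto simp: indicator_def max_def)
      qed
      also have "\<dots> = integral\<^sup>L L (pos x) + (\<beta> - x) * cdf L x"
        using iJ ind_int ind_eq by (simp add: L_def int_L_pos(2))
      finally have E: "integral\<^sup>L Lam (pos \<beta>) = integral\<^sup>L L (pos x) + (\<beta> - x) * cdf L x" .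
      have "integral\<^sup>L W (pos x) + (\<beta> - x) * cdf W x \<le> integral\<^sup>L W (pos \<beta>)"
        by (rule Wstep[OF RW sub_uniform_facts(2)[OF W] sub_uniform_facts(2)[OF W] xb])
      also have "\<dots> \<le> integral\<^sup>L Lam (pos \<beta>)" by (rule sub_uniform_facts(3)[OF W])
      finally have "(\<beta> - x) * cdf W x \<le> (\<beta> - x) * cdf L x" using E coup by simp
      then show ?thesis using xb unfolding L_def by simp
    qed
  qed
qed

end


lemma L_eq:
  assumes P0: "prob_space P0" "sets P0 = sets borel"
  shows "distr P0 borel (midp P0) = distr Lam borel (cdf_distribution.Jf (distr P0 borel uminus))"
proof -
  interpret P0: prob_space P0 by (rule P0(1))
  define P where "P = distr P0 borel (uminus :: real \<Rightarrow> real)"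
  have um: "(uminus :: real \<Rightarrow> real) \<in> measurable P0 borel"
    by (subst measurable_cong_sets[OF P0(2) refl]) simp
  have RD: "real_distribution P" unfolding P_def by (rule P0.real_distribution_distr[OF um])
  interpret D: cdf_distribution P using RD by (simp add: cdf_distribution_def)
  define mid where "mid s = (measure P {..<s} + cdf P s) / 2" for s
  have m1: "(\<lambda>t. measure P {..<t}) \<in> borel_measurable borel"
    by (rule borel_measurable_mono) (auto simp: mono_def intro!: D.finite_measure_mono)
  have m2: "cdf P \<in> borel_measurable borel" by (rule D.measurable_C)
  have midm: "mid \<in> borel_measurable borel" unfolding mid_def using m1 m2 by measurable
  have sp: "space P0 = UNIV" using sets_eq_imp_space_eq[OF P0(2)] by simp
  have midp_eq: "midp P0 = (\<lambda>t. mid (- t))"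
  proof
    fix t :: real
    have "measure P {..< -t} = measure P0 (uminus -` {..< -t} \<inter> space P0)"
      unfolding P_def by (rule measure_distr[OF um]) simp
    also have "uminus -` {..< -t} \<inter> space P0 = {t<..}" using sp by auto
    finally have 1: "measure P {..< -t} = measure P0 {t<..}" .
    have "cdf P (-t) = measure P0 (uminus -` {.. -t} \<inter> space P0)"
      unfolding P_def cdf_def by (rule measure_distr[OF um]) simp
    also have "uminus -` {.. -t} \<inter> space P0 = {t..}" using sp by auto
    finally have 2: "cdf P (-t) = measure P0 {t..}" .
    show "midp P0 t = mid (- t)" unfolding midp_def mid_def 1 2 by simp
  qed
  have "distr P0 borel (midp P0) = distr P0 borel (mid \<circ> uminus)" unfolding midp_eq by (simp add: comp_def)
  also have "\<dots> = distr P borel mid" unfolding P_def by (rule distr_distr[OF midm um, symmetric])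
  also have "\<dots> = distr (distr Lam borel D.I) borel mid" by (simp add: D.distr_I_eq_M)
  also have "\<dots> = distr Lam borel (mid \<circ> D.I)" by (rule distr_distr[OF midm D.measurable_Lam_I])
  also have "mid \<circ> D.I = D.Jf" by (rule ext) (simp add: mid_def D.Jf_def D.qa_def D.qb_def)
  finally show ?thesis unfolding P_def .
qed

theorem lemma1:
  fixes P0 :: "real measure" and x :: real
  assumes "prob_space P0" and "sets P0 = sets borel"
    and "x \<in> supp (distr P0 borel (midp P0))"
  shows "cdf (distr P0 borel (midp P0)) x =
    Sup {cdf W x | W. sub_uniform W \<and>
      (\<forall>y \<in> supp (distr P0 borel (midp P0)) \<inter> {0..<x}.
          cdf W y = cdf (distr P0 borel (midp P0)) y)}"
proof -
  interpret P0: prob_space P0 by (rule assms(1))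
  define P where "P = distr P0 borel (uminus :: real \<Rightarrow> real)"
  have um: "(uminus :: real \<Rightarrow> real) \<in> measurable P0 borel"
    by (subst measurable_cong_sets[OF assms(2) refl]) simp
  have RD: "real_distribution P" unfolding P_def by (rule P0.real_distribution_distr[OF um])
  interpret D: cdf_distribution P using RD by (simp add: cdf_distribution_def)
  have Leq: "distr P0 borel (midp P0) = distr Lam borel D.Jf"
    using L_eq[OF assms(1,2)] unfolding P_def .
  show ?thesis unfolding Leq
  proof (rule sym, rule cSup_eq_maximum)
    show "cdf (distr Lam borel D.Jf) x \<in> {cdf W x | W. sub_uniform W \<and>
      (\<forall>y \<in> supp (distr Lam borel D.Jf) \<inter> {0..<x}. cdf W y = cdf (distr Lam borel D.Jf) y)}"
      using D.L_sub by blast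
    fix v assume "v \<in> {cdf W x | W. sub_uniform W \<and>
      (\<forall>y \<in> supp (distr Lam borel D.Jf) \<inter> {0..<x}. cdf W y = cdf (distr Lam borel D.Jf) y)}"
    then obtain W where W: "sub_uniform W" and ag: "\<forall>y \<in> supp (distr Lam borel D.Jf) \<inter> {0..<x}. cdf W y = cdf (distr Lam borel D.Jf) y"
      and v: "v = cdf W x" by blast
    show "v \<le> cdf (distr Lam borel D.Jf) x"
      unfolding v by (rule D.main_bound[OF W assms(3)[unfolded Leq] ag])
  qed
qed

end
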